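(* Let $u_{\varepsilon,\ell}$ be a 3iet word with parameters $\varepsilon,\ell$, and let the continued fraction $\varepsilon=[0,a_1,a_2,a_3,\dots]$ have bounded partial quotients. Then $$ {\rm ind}(u_{\varepsilon,\ell})\geq \sup_{n\in\mathbb N} \Big\lfloor \frac{a_n}{2}\Big\rfloor\,. $$
   Context: Parameters $\varepsilon,\ell$ satisfy $\varepsilon\in(0,1)\setminus\mathbb Q$ and $\max\{\varepsilon,1-\varepsilon\}<\ell<1$. The three interval exchange $T_{\varepsilon,\ell}:[0,\ell)\to[0,\ell)$ is defined by $T_{\varepsilon,\ell}(x)=x+1-\varepsilon$ for $x\in I_A:=[0,\ell-1+\varepsilon)$, $T_{\varepsilon,\ell}(x)=x+1-2\varepsilon$ for $x\in I_B:=[\ell-1+\varepsilon,\varepsilon)$, and $T_{\varepsilon,\ell}(x)=x-\varepsilon$ for $x\in I_C:=[\varepsilon,\ell)$. A 3iet word with parameters $\varepsilon,\ell$ is the word $u=(u_n)_{n\in\mathbb N}$ over $\{A,B,C\}$ with $u_n=X$ iff $T_{\varepsilon,\ell}^n(x_0)\in I_X$, for some $x_0\in[0,\ell)$; its language and index do not depend on $x_0$. A word $v$ is a power $w^r$ ($r=|v|/|w|$) if $|v|\ge|w|$ and $v$ is a prefix of $www\cdots$; ${\rm ind}(w)=\sup\{r\in\mathbb Q: w^r \text{ is a factor of } u\}$ and ${\rm ind}(u)=\sup\{{\rm ind}(w): w \text{ a factor of } u\}$. *)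

theory Defs
  imports Complex_Main "HOL-Library.Extended_Real"
begin

datatype letter = A | B | C

definition T3 :: "real \<Rightarrow> real \<Rightarrow> real \<Rightarrow> real" where
  "T3 eps l x =
     (if x < l - 1 + eps then x + 1 - eps
      else if x < eps then x + 1 - 2 * eps
      else x - eps)"

definition code3 :: "real \<Rightarrow> real \<Rightarrow> real \<Rightarrow> letter" where
  "code3 eps l x =
     (if x < l - 1 + eps then A else if x < eps then B else C)"

definition iet3_word :: "real \<Rightarrow> real \<Rightarrow> real \<Rightarrow> nat \<Rightarrow> letter" where
  "iet3_word eps l x0 n = code3 eps l ((T3 eps l ^^ n) x0)"

definition is_factor :: "'a list \<Rightarrow> (nat \<Rightarrow> 'a) \<Rightarrow> bool" where
  "is_factor v u \<longleftrightarrow> (\<exists>i. v = map (\<lambda>k. u (i + k)) [0..<length v])"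

definition is_power_of :: "'a list \<Rightarrow> 'a list \<Rightarrow> bool" where
  "is_power_of v w \<longleftrightarrow> length w \<le> length v \<and>
     (\<forall>k < length v. v ! k = w ! (k mod length w))"

definition word_ind :: "(nat \<Rightarrow> 'a) \<Rightarrow> 'a list \<Rightarrow> ereal" where
  "word_ind u w = Sup {ereal (real (length v) / real (length w)) | v.
                         is_factor v u \<and> is_power_of v w}"

definition seq_ind :: "(nat \<Rightarrow> 'a) \<Rightarrow> ereal" where
  "seq_ind u = (SUP w \<in> {w. w \<noteq> [] \<and> is_factor w u}. word_ind u w)"

text \<open>Continued fraction expansion x = [a0; a1, a2, ...] via complete quotients.\<close>
fun cf_rest :: "real \<Rightarrow> nat \<Rightarrow> real" where
  "cf_rest x 0 = x"
| "cf_rest x (Suc n) = 1 / frac (cf_rest x n)"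

definition cf_pq :: "real \<Rightarrow> nat \<Rightarrow> int" where
  "cf_pq x n = \<lfloor>cf_rest x n\<rfloor>"

end

theory Submission
  imports Defs "HOL-Analysis.Analysis"
begin


fun Qs :: "real \<Rightarrow> nat \<Rightarrow> int" where
  "Qs e 0 = 0"
| "Qs e (Suc 0) = 1"
| "Qs e (Suc (Suc j)) = cf_pq e (Suc j) * Qs e (Suc j) + Qs e j"

fun Ps :: "real \<Rightarrow> nat \<Rightarrow> int" where
  "Ps e 0 = 1"
| "Ps e (Suc 0) = 0"
| "Ps e (Suc (Suc j)) = cf_pq e (Suc j) * Ps e (Suc j) + Ps e j"

fun Bt :: "real \<Rightarrow> nat \<Rightarrow> real" where
  "Bt e 0 = 1"
| "Bt e (Suc 0) = e"
| "Bt e (Suc (Suc j)) = Bt e j - cf_pq e (Suc j) * Bt e (Suc j)"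

lemma cf_rest_irrat:
  assumes "e \<notin> \<rat>" shows "cf_rest e j \<notin> \<rat>"
proof (induction j)
  case 0 then show ?case using assms by simp
next
  case (Suc j)
  have "frac (cf_rest e j) \<notin> \<rat>"
  proof
    assume "frac (cf_rest e j) \<in> \<rat>"
    then have "frac (cf_rest e j) + of_int \<lfloor>cf_rest e j\<rfloor> \<in> \<rat>" by simp
    then show False using Suc by (simp add: frac_def)
  qed
  then show ?case by (simp add: Rats_inverse_iff divide_inverse)
qed

lemma frac_pos_irrat: "x \<notin> \<rat> \<Longrightarrow> 0 < frac x"
proof -
  assume "x \<notin> \<rat>"
  then have "x \<notin> \<int>" using Ints_subset_Rats by blast
  then have "frac x \<noteq> 0" by (simp add: frac_eq_0_iff)
  then show ?thesis using frac_ge_0[of x] by linarith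
qed

context
  fixes e :: real
  assumes e0: "0 < e" and e1: "e < 1" and eirr: "e \<notin> \<rat>"
begin

definition "th j = frac (cf_rest e j)"

lemma th_pos: "0 < th j" and th_lt1: "th j < 1"
  using frac_pos_irrat[OF cf_rest_irrat[OF eirr]] frac_lt_1 by (auto simp: th_def)

lemma th0: "th 0 = e"
  using e0 e1 by (simp add: th_def frac_eq)

lemma cfpq_Suc_ge1: "cf_pq e (Suc j) \<ge> 1"
proof -
  have "1 / th j > 1" using th_pos th_lt1 by simp
  then show ?thesis by (simp add: cf_pq_def th_def le_floor_iff)
qed

lemma th_Suc: "th (Suc j) = 1 / th j - cf_pq e (Suc j)"
  by (simp add: th_def cf_pq_def frac_def)

lemma Bt_Suc: "Bt e (Suc j) = Bt e j * th j"
proof (induction j)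
  case 0 then show ?case by (simp add: th0)
next
  case (Suc j)
  have "th j \<noteq> 0" using th_pos[of j] by simp
  then show ?case using Suc by (simp add: th_Suc algebra_simps)
qed

lemma Bt_pos: "0 < Bt e j"
  by (induction j) (auto simp: Bt_Suc th_pos simp del: Bt.simps(3))

lemma Qs_pos: "0 \<le> Qs e j \<and> 1 \<le> Qs e (Suc j)"
proof (induction j)
  case 0 then show ?case by simp
next
  case (Suc j)
  have "cf_pq e (Suc j) * Qs e (Suc j) \<ge> 1 * 1"
    using cfpq_Suc_ge1[of j] Suc by (intro mult_mono) auto
  then show ?case using Suc by simp
qed

lemma det: "real_of_int (Qs e (Suc j)) * Bt e j + Qs e j * Bt e (Suc j) = 1"
proof (induction j)
  case 0 then show ?case by simp
next
  case (Suc j)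
  then show ?case by (simp add: algebra_simps)
qed

lemma sign2: "(real_of_int (Qs e j) * e - Ps e j = (-1) ^ (j + 1) * Bt e j) \<and>
   (real_of_int (Qs e (Suc j)) * e - Ps e (Suc j) = (-1) ^ (Suc j + 1) * Bt e (Suc j))"
proof (induction j)
  case 0 then show ?case by simp
next
  case (Suc j)
  define a where "a = real_of_int (cf_pq e (Suc j))"
  have "real_of_int (Qs e (Suc (Suc j))) * e - Ps e (Suc (Suc j)) =
     a * (real_of_int (Qs e (Suc j)) * e - Ps e (Suc j)) + (real_of_int (Qs e j) * e - Ps e j)"
    by (simp add: a_def algebra_simps)
  also have "\<dots> = a * ((-1) ^ (Suc j + 1) * Bt e (Suc j)) + (-1) ^ (j + 1) * Bt e j"
    using Suc by simp
  also have "\<dots> = (-1) ^ (Suc (Suc j) + 1) * Bt e (Suc (Suc j))"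
    by (simp add: a_def algebra_simps)
  finally show ?case using Suc by simp
qed

lemma sign: "real_of_int (Qs e j) * e - Ps e j = (-1) ^ (j + 1) * Bt e j"
  using sign2 by blast

lemma cf_approx:
  assumes "1 \<le> n"
  shows "\<exists>q::nat. \<exists>p::int. \<exists>\<sigma>::int. \<exists>\<delta>::real. 1 \<le> q \<and> (\<sigma> = 1 \<or> \<sigma> = -1) \<and> 0 < \<delta> \<and>
     real q * e = p + \<sigma> * \<delta> \<and> cf_pq e n * real q * \<delta> < 1"
proof -
  obtain j where n: "n = Suc j" using assms by (cases n) auto
  define q where "q = nat (Qs e (Suc j))"
  have q1: "1 \<le> q" and qq: "real q = Qs e (Suc j)" using Qs_pos[of j] by (auto simp: q_def)
  have "0 < Bt e (Suc (Suc j))" by (rule Bt_pos)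
  then have a: "cf_pq e (Suc j) * Bt e (Suc j) < Bt e j" by simp
  have "real q * Bt e j \<le> 1" using det[of j] Qs_pos[of j] Bt_pos[of "Suc j"] qq
    by (smt (verit) mult_nonneg_nonneg of_int_nonneg)
  moreover have "real q * (cf_pq e (Suc j) * Bt e (Suc j)) < real q * Bt e j"
    using a q1 by simp
  ultimately have ineq: "cf_pq e n * real q * Bt e (Suc j) < 1" using n by (simp add: algebra_simps)
  have pm: "(-1::int) ^ m = 1 \<or> (-1::int) ^ m = -1" for m by (induction m) auto
  have "(-1::int) ^ (Suc j + 1) = 1 \<or> (-1::int) ^ (Suc j + 1) = -1" by (rule pm)
  moreover have "real q * e = Ps e (Suc j) + real_of_int ((-1::int) ^ (Suc j + 1)) * Bt e (Suc j)"
    using sign[of "Suc j"] qq by (simp add: algebra_simps)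
  ultimately show ?thesis
    using q1 ineq Bt_pos[of "Suc j"] by blast
qed

end



lemma word_power:
  fixes u :: "nat \<Rightarrow> 'a"
  assumes L: "1 \<le> L" and K: "1 \<le> K" and per: "\<forall>j<(K-1)*L. u (i+j+L) = u (i+j)"
  shows "ereal (real K) \<le> seq_ind u"
proof -
  define v where "v = map (\<lambda>j. u (i + j)) [0..<K*L]"
  define w where "w = map (\<lambda>j. u (i + j)) [0..<L]"
  have fv: "is_factor v u" unfolding is_factor_def v_def by auto
  have fw: "is_factor w u" unfolding is_factor_def w_def by auto
  have wne: "w \<noteq> []" using L by (simp add: w_def)
  have key: "j < K*L \<Longrightarrow> u (i + j) = u (i + j mod L)" for j
  proof (induction j rule: less_induct)
    case (less j)
    show ?case
    proof (cases "j < L")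
      case True then show ?thesis by simp
    next
      case False
      then obtain j' where j': "j = j' + L" by (metis add.commute le_add_diff_inverse not_less)
      have "j' < (K-1)*L" using less.prems j' K by (simp add: algebra_simps diff_mult_distrib)
      then have "u (i + j) = u (i + j')" using per j' by (simp add: add.assoc)
      also have "\<dots> = u (i + j' mod L)" using less.IH[of j'] j' less.prems L by simp
      finally show ?thesis using j' by simp
    qed
  qed
  have pw: "is_power_of v w"
    unfolding is_power_of_def v_def w_def using K L key
    by (auto simp: nth_append)
  have "ereal (real (length v) / real (length w)) \<le> word_ind u w"
    unfolding word_ind_def using fv pw by (intro Sup_upper) blast
  moreover have "real (length v) / real (length w) = real K" using L by (simp add: v_def w_def)
  moreover have "word_ind u w \<le> seq_ind u"
    unfolding seq_ind_def using wne fw by (intro SUP_upper) auto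
  ultimately show ?thesis by simp
qed

lemma seq_ind_ge1: "1 \<le> seq_ind u"
  using word_power[of 1 1 u 0] by (simp add: one_ereal_def)





lemma frac_diff_int: "frac (x - of_int n) = frac x"
  by (metis diff_conv_add_uminus frac_add_of_int_right of_int_minus)

lemma frac_frac_sub: "frac (frac x - e) = frac (x - e)"
proof -
  have "frac x - e = (x - e) - of_int \<lfloor>x\<rfloor>" by (simp add: frac_def algebra_simps)
  then show ?thesis by (metis frac_diff_int)
qed

lemma frac_shift: "0 \<le> x + of_int n \<Longrightarrow> x + of_int n < 1 \<Longrightarrow> frac x = x + of_int n"
  by (metis frac_add_of_int_right frac_eq)



lemma frac_sub_frac: "frac ((s::real) - t) = frac (frac s - t)"
  by (rule frac_frac_sub[symmetric])

lemma my_frac_id: "0 \<le> (x::real) \<Longrightarrow> x < 1 \<Longrightarrow> frac x = x"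
  by (simp add: frac_eq)

lemma my_frac_id1: "0 \<le> (x::real) + 1 \<Longrightarrow> x < 0 \<Longrightarrow> frac x = x + 1"
  using frac_shift[of x 1] by simp

lemma frac_sub_frac2: "frac (s - t) = frac (s - frac t)"
proof -
  have "s - frac t = (s - t) + of_int \<lfloor>t\<rfloor>" by (simp add: frac_def)
  then show ?thesis by (metis frac_add_of_int_right)
qed

lemma cover1:
  fixes y s \<delta> :: real
  assumes "0 \<le> y" "y < 1" "frac (y - s) \<le> \<delta>"
  shows "y \<in> {frac s..min 1 (frac s + \<delta>)} \<union> {0..max 0 (frac s + \<delta> - 1)}"
proof (cases "frac s \<le> y")
  case True
  have "frac (y - s) = frac (y - frac s)" by (rule frac_sub_frac2)
  also have "\<dots> = y - frac s"
      by (rule my_frac_id[of "y - frac s"]) (use True assms frac_ge_0[of s] in linarith)+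
  finally show ?thesis using True assms by auto
next
  case False
  have "frac (y - s) = frac (y - frac s)" by (rule frac_sub_frac2)
  also have "\<dots> = y - frac s + 1"
      by (rule my_frac_id1[of "y - frac s"]) (use False assms frac_lt_1[of s] in linarith)+
  finally show ?thesis using False assms by auto
qed

lemma cover2:
  fixes y s \<delta> :: real
  assumes "0 \<le> y" "y < 1" "frac (- (y - s)) \<le> \<delta>"
  shows "y \<in> {max 0 (frac s - \<delta>)..frac s} \<union> {min 1 (frac s + 1 - \<delta>)..1}"
proof -
  have e: "frac (- (y - s)) = frac (frac s - y)" using frac_sub_frac[of s y] by simp
  show ?thesis
  proof (cases "y \<le> frac s")
    case True
    have "frac (frac s - y) = frac s - y"
      by (rule my_frac_id[of "frac s - y"]) (use True assms frac_lt_1[of s] in linarith)+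
    then show ?thesis using True assms e by auto
  next
    case False
    have "frac (frac s - y) = frac s - y + 1"
      by (rule my_frac_id1[of "frac s - y"]) (use False assms frac_ge_0[of s] in linarith)+
    then show ?thesis using False assms e by auto
  qed
qed

lemma meas_J:
  fixes a :: real
  assumes "0 < \<delta>" "0 \<le> a" "a < 1"
  shows "emeasure lborel ({a..min 1 (a + \<delta>)} \<union> {0..max 0 (a + \<delta> - 1)}) \<le> ennreal \<delta>"
    and "emeasure lborel ({max 0 (a - \<delta>)..a} \<union> {min 1 (a + 1 - \<delta>)..1}) \<le> ennreal \<delta>"
proof -
  have "emeasure lborel ({a..min 1 (a + \<delta>)} \<union> {0..max 0 (a + \<delta> - 1)})
     \<le> emeasure lborel {a..min 1 (a + \<delta>)} + emeasure lborel {0..max 0 (a + \<delta> - 1)}"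
    by (rule emeasure_subadditive) auto
  also have "\<dots> = ennreal (if a \<le> min 1 (a + \<delta>) then min 1 (a + \<delta>) - a else 0) + ennreal (max 0 (a + \<delta> - 1))"
    by (simp add: emeasure_lborel_Icc_eq)
  also have "\<dots> = ennreal ((if a \<le> min 1 (a + \<delta>) then min 1 (a + \<delta>) - a else 0) + max 0 (a + \<delta> - 1))"
    by (rule ennreal_plus[symmetric]) auto
  also have "\<dots> \<le> ennreal \<delta>" using assms by (intro ennreal_leI) auto
  finally show "emeasure lborel ({a..min 1 (a + \<delta>)} \<union> {0..max 0 (a + \<delta> - 1)}) \<le> ennreal \<delta>" .
  have "emeasure lborel ({max 0 (a - \<delta>)..a} \<union> {min 1 (a + 1 - \<delta>)..1})
     \<le> emeasure lborel {max 0 (a - \<delta>)..a} + emeasure lborel {min 1 (a + 1 - \<delta>)..1}"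
    by (rule emeasure_subadditive) auto
  also have "\<dots> = ennreal (if max 0 (a - \<delta>) \<le> a then a - max 0 (a - \<delta>) else 0) + ennreal (if min 1 (a + 1 - \<delta>) \<le> 1 then 1 - min 1 (a + 1 - \<delta>) else 0)"
    by (simp add: emeasure_lborel_Icc_eq)
  also have "\<dots> = ennreal ((if max 0 (a - \<delta>) \<le> a then a - max 0 (a - \<delta>) else 0) + (if min 1 (a + 1 - \<delta>) \<le> 1 then 1 - min 1 (a + 1 - \<delta>) else 0))"
    by (rule ennreal_plus[symmetric]) auto
  also have "\<dots> \<le> ennreal \<delta>" using assms by (intro ennreal_leI) auto
  finally show "emeasure lborel ({max 0 (a - \<delta>)..a} \<union> {min 1 (a + 1 - \<delta>)..1}) \<le> ennreal \<delta>" .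
qed

lemma measure_avoid:
  fixes S :: "real set" and \<sigma> :: int
  assumes S: "finite S" and sg: "\<sigma> = 1 \<or> \<sigma> = -1" and d: "0 < \<delta>" and small: "real (card S) * \<delta> < 1"
  shows "\<exists>y. 0 \<le> y \<and> y < 1 \<and> (\<forall>s\<in>S. \<delta> < frac (\<sigma> * (y - s)))"
proof (rule ccontr)
  assume H: "\<not> ?thesis"
  define J where "J s = (if \<sigma> = 1 then {frac s..min 1 (frac s + \<delta>)} \<union> {0..max 0 (frac s + \<delta> - 1)}
     else {max 0 (frac s - \<delta>)..frac s} \<union> {min 1 (frac s + 1 - \<delta>)..1})" for s
  have cov: "{0..<1} \<subseteq> (\<Union>s\<in>S. J s)"
  proof
    fix y :: real assume y: "y \<in> {0..<1}"
    then obtain s where s: "s \<in> S" "frac (\<sigma> * (y - s)) \<le> \<delta>" using H by force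
    show "y \<in> (\<Union>s\<in>S. J s)"
    proof (cases "\<sigma> = 1")
      case True then show ?thesis using s y cover1[of y s \<delta>] by (auto simp: J_def)
    next
      case False then have "\<sigma> = -1" using sg by simp
      then show ?thesis using s y cover2[of y s \<delta>] False by (auto simp: J_def)
    qed
  qed
  have Jm: "J s \<in> sets lborel" for s by (auto simp: J_def)
  have "ennreal 1 = emeasure lborel {0..<(1::real)}" by simp
  also have "\<dots> \<le> emeasure lborel (\<Union>s\<in>S. J s)" using cov Jm S by (intro emeasure_mono) auto
  also have "\<dots> \<le> (\<Sum>s\<in>S. emeasure lborel (J s))" using S Jm by (intro emeasure_subadditive_finite) auto
  also have "\<dots> \<le> (\<Sum>s\<in>S. ennreal \<delta>)"
    using meas_J[OF d frac_ge_0 frac_lt_1] by (intro sum_mono) (auto simp: J_def)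
  also have "\<dots> = ennreal (real (card S) * \<delta>)" using d by (simp add: ennreal_mult ennreal_of_nat_eq_real_of_nat)
  finally have "1 \<le> real (card S) * \<delta>" using d by (simp add: ennreal_le_iff2 ennreal_le_1)
  then show False using small by simp
qed

lemma frac_open:
  fixes x \<delta> :: real
  assumes "\<delta> < frac x" "0 \<le> \<delta>"
  shows "\<exists>r>0. \<forall>h. \<bar>h\<bar> < r \<longrightarrow> \<delta> < frac (x + h)"
proof (intro exI[of _ "min (frac x - \<delta>) (1 - frac x)"] conjI allI impI)
  show "0 < min (frac x - \<delta>) (1 - frac x)" using assms frac_lt_1[of x] by simp
  fix h :: real assume h: "\<bar>h\<bar> < min (frac x - \<delta>) (1 - frac x)"
  have "frac (x + h) = frac ((frac x + h) + of_int \<lfloor>x\<rfloor>)" by (simp add: frac_def)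
  also have "\<dots> = frac (frac x + h)" by (rule frac_add_of_int_right)
  also have "\<dots> = frac x + h" using h assms frac_lt_1[of x] my_frac_id[of "frac x + h"] by (auto simp: abs_less_iff)
  finally show "\<delta> < frac (x + h)" using h by (auto simp: abs_less_iff)
qed

lemma good_open:
  fixes S :: "real set" and \<sigma> :: int
  assumes S: "finite S" and sg: "\<sigma> = 1 \<or> \<sigma> = -1" and d: "0 \<le> \<delta>"
    and y0: "\<forall>s\<in>S. \<delta> < frac (\<sigma> * (y0 - s))"
  shows "\<exists>r>0. \<forall>z. \<bar>z - y0\<bar> < r \<longrightarrow> (\<forall>s\<in>S. \<delta> < frac (\<sigma> * (z - s)))"
proof -
  have "\<forall>s\<in>S. eventually (\<lambda>z. \<delta> < frac (\<sigma> * (z - s))) (nhds y0)"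
  proof
    fix s assume "s \<in> S"
    then obtain r where r: "r > 0" "\<forall>h. \<bar>h\<bar> < r \<longrightarrow> \<delta> < frac (\<sigma> * (y0 - s) + h)"
      using frac_open[of \<delta> "\<sigma> * (y0 - s)"] y0 d by blast
    have "\<delta> < frac (\<sigma> * (z - s))" if "dist z y0 < r" for z
    proof -
      have "\<sigma> * (z - s) = \<sigma> * (y0 - s) + \<sigma> * (z - y0)" by (simp add: algebra_simps)
      moreover have "\<bar>\<sigma> * (z - y0)\<bar> < r" using that sg by (auto simp: dist_real_def abs_minus_commute)
      ultimately show ?thesis using r by metis
    qed
    then show "eventually (\<lambda>z. \<delta> < frac (\<sigma> * (z - s))) (nhds y0)"
      unfolding eventually_nhds_metric using r by blast
  qed
  then have "eventually (\<lambda>z. \<forall>s\<in>S. \<delta> < frac (\<sigma> * (z - s))) (nhds y0)"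
    using S by (simp add: eventually_ball_finite)
  then show ?thesis unfolding eventually_nhds_metric by (auto simp: dist_real_def)
qed




context
  fixes eps l :: real
  assumes e0: "0 < eps" and e1: "eps < 1" and eirr: "eps \<notin> \<rat>"
    and lb: "max eps (1 - eps) < l" and l1: "l < 1"
begin

definition "R x = frac (x - eps)"
definition "Tw x = (if x < l then x else R x)"
abbreviation "T \<equiv> T3 eps l"
definition "cnt y M = (\<Sum>m<M. if (R ^^ m) y < l then 1 else (0::nat))"
definition "code4 x = (if x < l then Some (code3 eps l x) else None)"

lemma R_range: "0 \<le> R x" "R x < 1"
  by (auto simp: R_def frac_lt_1)

lemma T_eq: assumes "0 \<le> x" "x < l" shows "T x = Tw (R x)"
proof -
  have le: "l - 1 + eps < eps" "eps < l" "1 - eps < l" using lb l1 by auto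
  consider "x < l - 1 + eps" | "l - 1 + eps \<le> x" "x < eps" | "eps \<le> x" by linarith
  then show ?thesis
  proof cases
    case 1
    then have "R x = x - eps + 1" unfolding R_def using assms e0 e1 l1
      using frac_shift[of "x - eps" 1] by simp
    then show ?thesis using 1 by (simp add: T3_def Tw_def)
  next
    case 2
    then have r: "R x = x - eps + 1" unfolding R_def using assms e0 e1 l1
      using frac_shift[of "x - eps" 1] by simp
    have "frac (x - eps + 1 - eps) = x + 1 - 2 * eps" using 2 lb assms
      using frac_shift[of "x - eps + 1 - eps" 0] by simp
    then have "R (R x) = x + 1 - 2 * eps" using r by (simp add: R_def)
    then show ?thesis using 2 r le by (simp add: T3_def Tw_def)
  next
    case 3
    then have "R x = x - eps" unfolding R_def using assms l1 e0
      using frac_shift[of "x - eps" 0] by simp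
    then show ?thesis using 3 assms le by (simp add: T3_def Tw_def)
  qed
qed

lemma R_big: assumes "l \<le> x" "x < 1" shows "R x < l" "R x = x - eps"
proof -
  have "R x = x - eps" unfolding R_def using assms lb e1
    using frac_shift[of "x - eps" 0] by simp
  then show "R x = x - eps" "R x < l" using assms lb by auto
qed

lemma Tw_range: "0 \<le> x \<Longrightarrow> x < 1 \<Longrightarrow> 0 \<le> Tw x \<and> Tw x < l"
  using R_big[of x] R_range[of x] by (auto simp: Tw_def)

lemma cnt_Suc: "cnt x (Suc k) = (if x < l then 1 else 0) + cnt (R x) k"
  unfolding cnt_def sum.lessThan_Suc_shift by (simp add: funpow_Suc_right del: funpow.simps)

lemma funpow_R_range: "0 \<le> x \<Longrightarrow> x < 1 \<Longrightarrow> 0 \<le> (R ^^ k) x \<and> (R ^^ k) x < 1"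
  by (cases k) (auto simp: R_range)

lemma lemB: "0 \<le> x \<Longrightarrow> x < 1 \<Longrightarrow> Tw ((R ^^ k) x) = (T ^^ (cnt x k)) (Tw x)"
proof (induction k arbitrary: x)
  case 0 then show ?case by (simp add: cnt_def)
next
  case (Suc k)
  have IH: "Tw ((R ^^ k) (R x)) = (T ^^ (cnt (R x) k)) (Tw (R x))"
    using Suc.IH R_range by blast
  show ?case
  proof (cases "x < l")
    case True
    then have "(T ^^ (cnt x (Suc k))) (Tw x) = (T ^^ (cnt (R x) k)) (T x)"
      by (simp add: cnt_Suc Tw_def funpow_Suc_right del: funpow.simps)
    also have "T x = Tw (R x)" using T_eq True Suc.prems by simp
    finally show ?thesis using IH by (simp add: funpow_Suc_right del: funpow.simps)
  next
    case False
    then have "Tw (R x) = R x" "Tw x = R x" using R_big[of x] Suc.prems by (auto simp: Tw_def)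
    then show ?thesis using IH False by (simp add: cnt_Suc funpow_Suc_right del: funpow.simps)
  qed
qed

lemma lemA: "0 \<le> x \<Longrightarrow> x < 1 \<Longrightarrow> 0 \<le> x' \<Longrightarrow> x' < 1 \<Longrightarrow>
  (\<forall>m<M. code4 ((R ^^ m) x) = code4 ((R ^^ m) x')) \<Longrightarrow>
  j < cnt x M \<Longrightarrow> code3 eps l ((T ^^ j) (Tw x)) = code3 eps l ((T ^^ j) (Tw x'))"
proof (induction M arbitrary: x x' j)
  case 0 then show ?case by (simp add: cnt_def)
next
  case (Suc M)
  have c0: "code4 x = code4 x'" using Suc.prems(5) by (metis funpow_0 zero_less_Suc)
  have sh: "\<forall>m<M. code4 ((R ^^ m) (R x)) = code4 ((R ^^ m) (R x'))"
    using Suc.prems(5) by (metis Suc_mono funpow_Suc_right o_apply)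
  have IH: "\<And>j. j < cnt (R x) M \<Longrightarrow>
     code3 eps l ((T ^^ j) (Tw (R x))) = code3 eps l ((T ^^ j) (Tw (R x')))"
    using Suc.IH[OF R_range R_range sh] by blast
  show ?case
  proof (cases "x < l")
    case True
    then have x': "x' < l" and cc: "code3 eps l x = code3 eps l x'" using c0
      by (auto simp: code4_def split: if_splits)
    show ?thesis
    proof (cases j)
      case 0 then show ?thesis using True x' cc by (simp add: Tw_def)
    next
      case (Suc j')
      then have "j' < cnt (R x) M" using Suc.prems(6) True by (simp add: cnt_Suc)
      then show ?thesis using IH[of j'] Suc T_eq[of x] T_eq[of x'] True x' Suc.prems
        by (simp add: Tw_def funpow_Suc_right del: funpow.simps)
    qed
  next
    case False
    then have x': "\<not> x' < l" using c0 by (auto simp: code4_def split: if_splits)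
    have "Tw (R x) = R x" "Tw x = R x" "Tw (R x') = R x'" "Tw x' = R x'"
      using R_big[of x] R_big[of x'] Suc.prems False x' by (auto simp: Tw_def)
    then show ?thesis using IH[of j] Suc.prems(6) False by (simp add: cnt_Suc)
  qed
qed


lemma Rpow: "0 \<le> y \<Longrightarrow> y < 1 \<Longrightarrow> (R ^^ m) y = frac (y - real m * eps)"
proof (induction m)
  case 0 then show ?case by (simp add: my_frac_id)
next
  case (Suc m)
  have "(R ^^ Suc m) y = R ((R ^^ m) y)" by simp
  also have "\<dots> = R (frac (y - real m * eps))" by (simp only: Suc.IH[OF Suc.prems])
  also have "\<dots> = frac (frac (y - real m * eps) - eps)" by (simp add: R_def)
  also have "\<dots> = frac (y - real (Suc m) * eps)" by (simp add: frac_frac_sub algebra_simps)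
  finally show ?case .
qed

lemma H1:
  fixes t c \<delta> :: real
  assumes "0 \<le> c" "\<delta> < frac (t - c)" "0 \<le> \<delta>"
  shows "frac t < c \<longleftrightarrow> frac t - \<delta> < c"
proof (cases "frac t < c")
  case False
  have "frac (t - c) = frac (frac t - c)" by (simp add: frac_frac_sub)
  also have "\<dots> = frac t - c" using False assms frac_lt_1[of t]
    by (intro my_frac_id) linarith+
  finally show ?thesis using False assms by linarith
qed (use assms in linarith)

lemma H2:
  fixes t c \<delta> :: real
  assumes "c < 1" "\<delta> < frac (c - t)" "0 \<le> \<delta>"
  shows "frac t < c \<longleftrightarrow> frac t + \<delta> < c"
proof (cases "frac t < c")
  case True
  have "frac (c - t) = frac (c - frac t)" by (rule frac_sub_frac2)
  also have "\<dots> = c - frac t" using True assms frac_ge_0[of t]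
    by (intro my_frac_id) linarith+
  finally show ?thesis using True assms by linarith
next
  case False
  then show ?thesis using assms by linarith
qed

lemma code4_eq:
  assumes "(z < l - 1 + eps) = (z' < l - 1 + eps)" "(z < eps) = (z' < eps)" "(z < l) = (z' < l)"
  shows "code4 z = code4 z'"
  using assms by (simp add: code4_def code3_def)

lemma agree_step:
  fixes \<sigma> :: int and p :: int and t \<delta> :: real
  assumes sg: "\<sigma> = 1 \<or> \<sigma> = -1" and d: "0 < \<delta>" and qe: "real q * eps = p + \<sigma> * \<delta>"
    and c0: "\<delta> < frac (\<sigma> * (t - 0))" and c1: "\<delta> < frac (\<sigma> * (t - eps))"
    and c2: "\<delta> < frac (\<sigma> * (t - l))" and c3: "\<delta> < frac (\<sigma> * (t - (l - 1 + eps)))"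
  shows "code4 (frac t) = code4 (frac (t - real q * eps))"
proof -
  have cpos: "0 \<le> l - 1 + eps" "0 \<le> eps" "0 \<le> l" "l - 1 + eps < 1" "eps < 1" "l < 1"
    using lb l1 e0 e1 by auto
  have ft: "frac (t - real q * eps) = frac (t - \<sigma> * \<delta>)"
  proof -
    have "t - real q * eps = (t - \<sigma> * \<delta>) - of_int p" using qe by simp
    then show ?thesis by (metis frac_diff_int)
  qed
  show ?thesis
  proof (cases "\<sigma> = 1")
    case True
    then have c0': "\<delta> < frac t" using c0 by simp
    have "frac (t - \<sigma> * \<delta>) = frac (frac t - \<delta>)" using True by (simp add: frac_frac_sub)
    also have "\<dots> = frac t - \<delta>" using c0' d frac_lt_1[of t] by (intro my_frac_id) linarith+
    finally have z: "frac (t - real q * eps) = frac t - \<delta>" using ft by simp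
    show ?thesis unfolding z
      by (rule code4_eq; rule H1) (use cpos c1 c2 c3 True d in auto)
  next
    case False
    then have m1: "\<sigma> = -1" using sg by simp
    have c0': "\<delta> < frac (- t)" using c0 m1 by simp
    have "frac (- t) = frac (0 - frac t)" using frac_sub_frac2[of 0 t] by simp
    moreover have "frac t \<noteq> 0"
    proof
      assume "frac t = 0"
      then have "t \<in> \<int>" by (simp add: frac_eq_0_iff)
      then have "- t \<in> \<int>" by simp
      then have "frac (- t) = 0" by (simp add: frac_eq_0_iff)
      then show False using c0' d by linarith
    qed
    ultimately have "frac (- t) = 1 - frac t" using frac_ge_0[of t] frac_lt_1[of t]
      using my_frac_id1[of "0 - frac t"] by simp
    then have lt: "frac t + \<delta> < 1" using c0' by simp
    have "frac (t - \<sigma> * \<delta>) = frac (frac t + \<delta>)"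
      using m1 frac_frac_sub[of t "-\<delta>"] by simp
    also have "\<dots> = frac t + \<delta>" using lt d frac_ge_0[of t] by (intro my_frac_id) linarith+
    finally have z: "frac (t - real q * eps) = frac t + \<delta>" using ft by simp
    have c1': "\<delta> < frac (eps - t)" "\<delta> < frac (l - t)" "\<delta> < frac ((l - 1 + eps) - t)"
      using c1 c2 c3 m1 by (simp_all add: algebra_simps)
    show ?thesis unfolding z
      by (rule code4_eq; rule H2) (use cpos c1' d in auto)
  qed
qed

definition "SS W = (\<lambda>m. real m * eps) ` {..W} \<union> (\<lambda>m. l + real m * eps) ` {..W}"

lemma SS_finite: "finite (SS W)" by (simp add: SS_def)

lemma SS_card: "card (SS W) \<le> 2 * (W + 1)"
proof -
  have "card (SS W) \<le> card ((\<lambda>m. real m * eps) ` {..W}) + card ((\<lambda>m. l + real m * eps) ` {..W})"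
    unfolding SS_def by (rule card_Un_le)
  also have "\<dots> \<le> card {..W} + card {..W}" by (intro add_mono card_image_le) auto
  finally show ?thesis by simp
qed

lemma good_agree:
  fixes \<sigma> :: int and p :: int and y \<delta> :: real
  assumes sg: "\<sigma> = 1 \<or> \<sigma> = -1" and d: "0 < \<delta>" and qe: "real q * eps = p + \<sigma> * \<delta>"
    and good: "\<forall>s\<in>SS W. \<delta> < frac (\<sigma> * (y - s))" and y: "0 \<le> y" "y < 1" and m: "m < W"
  shows "code4 ((R ^^ m) y) = code4 ((R ^^ (m + q)) y)"
proof -
  define t where "t = y - real m * eps"
  have e1': "(R ^^ m) y = frac t" using Rpow[OF y] t_def by simp
  have e2': "(R ^^ (m + q)) y = frac (t - real q * eps)" using Rpow[OF y, of "m + q"] by (simp add: t_def algebra_simps)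
  have mm: "m \<in> {..W}" "Suc m \<in> {..W}" using m by auto
  have i1: "real m * eps \<in> SS W" "real (Suc m) * eps \<in> SS W" "l + real m * eps \<in> SS W"
     "l + real (Suc m) * eps \<in> SS W"
    unfolding SS_def
    apply (rule UnI1, rule rev_image_eqI[OF mm(1)], simp)
    apply (rule UnI1, rule rev_image_eqI[OF mm(2)], simp)
    apply (rule UnI2, rule rev_image_eqI[OF mm(1)], simp)
    apply (rule UnI2, rule rev_image_eqI[OF mm(2)], simp)
    done
  have a0: "\<delta> < frac (\<sigma> * (t - 0))" using good i1(1) by (simp add: t_def)
  have "\<sigma> * (t - eps) = \<sigma> * (y - real (Suc m) * eps)" by (simp add: t_def algebra_simps)
  then have a1: "\<delta> < frac (\<sigma> * (t - eps))" using good i1(2) by metis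
  have "\<sigma> * (t - l) = \<sigma> * (y - (l + real m * eps))" by (simp add: t_def algebra_simps)
  then have a2: "\<delta> < frac (\<sigma> * (t - l))" using good i1(3) by metis
  have "\<sigma> * (t - (l - 1 + eps)) = \<sigma> * (y - (l + real (Suc m) * eps)) + of_int \<sigma>"
    by (simp add: t_def algebra_simps)
  then have a3: "\<delta> < frac (\<sigma> * (t - (l - 1 + eps)))" using good i1(4)
    by (simp add: frac_add_of_int_right)
  show ?thesis unfolding e1' e2' by (rule agree_step[OF sg d qe a0 a1 a2 a3])
qed

lemma cnt_add: "cnt x (M1 + M2) = cnt x M1 + cnt ((R ^^ M1) x) M2"
proof (induction M1 arbitrary: x)
  case 0 then show ?case by (simp add: cnt_def)
next
  case (Suc M1)
  show ?case using Suc[of "R x"]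
    by (simp add: cnt_Suc funpow_Suc_right del: funpow.simps)
qed

lemma cnt_cong: "(\<forall>m<M. code4 ((R ^^ m) x) = code4 ((R ^^ m) x')) \<Longrightarrow> cnt x M = cnt x' M"
  unfolding cnt_def by (intro sum.cong refl) (auto simp: code4_def split: if_splits)

lemma cnt_pos: "m < M \<Longrightarrow> (R ^^ m) x < l \<Longrightarrow> 1 \<le> cnt x M"
proof -
  assume a: "m < M" "(R ^^ m) x < l"
  then have "M = m + Suc (M - m - 1)" by simp
  then have "cnt x M = cnt x m + cnt ((R ^^ m) x) (Suc (M - m - 1))" using cnt_add by metis
  then show ?thesis using a by (simp add: cnt_Suc)
qed

lemma power_exists:
  fixes \<sigma> :: int and p :: int and x0 \<delta> :: real
  assumes q1: "1 \<le> q" and sg: "\<sigma> = 1 \<or> \<sigma> = -1" and d: "0 < \<delta>" and qe: "real q * eps = p + \<sigma> * \<delta>"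
    and K2: "2 \<le> K" and small: "real (2 * ((K - 1) * q + 1)) * \<delta> < 1"
    and x0: "0 \<le> x0" "x0 < l"
  shows "ereal (real K) \<le> seq_ind (iet3_word eps l x0)"
proof -
  define W where "W = (K - 1) * q"
  have "1 \<le> K - 1" using K2 by arith
  then have "1 * q \<le> (K - 1) * q" by (rule mult_right_mono) simp
  then have Wq: "q \<le> W" by (simp add: W_def)
  have "real (card (SS W)) * \<delta> \<le> real (2 * (W + 1)) * \<delta>"
    using SS_card[of W] d by (intro mult_right_mono) auto
  then have sm: "real (card (SS W)) * \<delta> < 1" using small by (simp add: W_def)
  obtain y0 where y0: "0 \<le> y0" "y0 < 1" "\<forall>s\<in>SS W. \<delta> < frac (\<sigma> * (y0 - s))"
    using measure_avoid[OF SS_finite sg d sm] by blast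
  obtain r where r: "r > 0" "\<forall>z. \<bar>z - y0\<bar> < r \<longrightarrow> (\<forall>s\<in>SS W. \<delta> < frac (\<sigma> * (z - s)))"
    using good_open[OF SS_finite sg _ y0(3)] d by auto
  have nq: "- eps \<notin> \<rat>" using eirr by simp
  obtain h k where hk: "k > 0" "\<bar>of_int k * (- eps) - of_int h - (y0 - x0)\<bar> < r"
    using sequence_of_fractional_parts_is_dense[OF nq r(1)] by blast
  define z where "z = x0 - of_int k * eps - of_int h"
  have "\<bar>z - y0\<bar> < r" using hk(2) by (simp add: z_def algebra_simps)
  then have gz: "\<forall>s\<in>SS W. \<delta> < frac (\<sigma> * (z - s))" using r by blast
  define kn where "kn = nat k"
  have kn: "real kn = of_int k" using hk(1) by (simp add: kn_def)
  define y where "y = frac (x0 - real kn * eps)"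
  have gy: "\<forall>s\<in>SS W. \<delta> < frac (\<sigma> * (y - s))"
  proof
    fix s assume s: "s \<in> SS W"
    have eq: "\<sigma> * (y - s) = \<sigma> * (z - s) + of_int (\<sigma> * (h - \<lfloor>x0 - real kn * eps\<rfloor>))"
      by (simp add: y_def z_def kn frac_def algebra_simps)
    show "\<delta> < frac (\<sigma> * (y - s))" unfolding eq frac_add_of_int_right using gz s by blast
  qed
  have x01: "0 \<le> x0" "x0 < 1" using x0 l1 by auto
  have yR: "y = (R ^^ kn) x0" using Rpow[OF x01] by (simp add: y_def)
  have y01: "0 \<le> y" "y < 1" by (auto simp: y_def frac_lt_1)
  define y' where "y' = (R ^^ q) y"
  have y'01: "0 \<le> y'" "y' < 1" using funpow_R_range[OF y01] by (auto simp: y'_def)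
  have agr: "\<forall>m<W. code4 ((R ^^ m) y) = code4 ((R ^^ m) y')"
  proof (intro allI impI)
    fix m assume "m < W"
    then have "code4 ((R ^^ m) y) = code4 ((R ^^ (m + q)) y)"
      using good_agree[OF sg d qe gy y01] by blast
    then show "code4 ((R ^^ m) y) = code4 ((R ^^ m) y')" by (simp add: y'_def funpow_add)
  qed
  define L where "L = cnt y q"
  define c where "c = cnt x0 kn"
  have Tx0: "Tw x0 = x0" using x0 by (simp add: Tw_def)
  have B1: "Tw y' = (T ^^ L) (Tw y)" unfolding y'_def L_def by (rule lemB[OF y01])
  have B2: "Tw y = (T ^^ c) x0" unfolding yR c_def using lemB[OF x01] Tx0 by simp
  define u where "u = iet3_word eps l x0"
  have uc: "u (c + j) = code3 eps l ((T ^^ j) (Tw y))" for j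
  proof -
    have "(T ^^ (c + j)) x0 = (T ^^ j) ((T ^^ c) x0)" by (metis add.commute comp_apply funpow_add)
    then show ?thesis by (simp add: u_def iet3_word_def B2)
  qed
  have cmul: "b \<le> K - 1 \<Longrightarrow> cnt y (b * q) = b * L" for b
  proof (induction b)
    case 0 then show ?case by (simp add: cnt_def)
  next
    case (Suc b)
    have "cnt y (Suc b * q) = cnt y (q + b * q)" by simp
    also have "\<dots> = L + cnt y' (b * q)" unfolding L_def y'_def by (rule cnt_add)
    also have "cnt y' (b * q) = cnt y (b * q)"
    proof (rule cnt_cong[symmetric], intro allI impI)
      fix m assume "m < b * q"
      moreover have "b < K - 1" using Suc.prems by simp
      then have "b * q < W" using q1 by (simp add: W_def)
      ultimately show "code4 ((R ^^ m) y) = code4 ((R ^^ m) y')" using agr by simp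
    qed
    finally show ?case using Suc by simp
  qed
  have cW: "cnt y W = (K - 1) * L" using cmul[of "K - 1"] by (simp add: W_def)
  have L1: "1 \<le> L"
  proof (cases "y < l")
    case True then show ?thesis unfolding L_def using cnt_pos[of 0 q y] q1 by simp
  next
    case False
    have Ry: "R y < l" using R_big[of y] False y01 by simp
    show ?thesis
    proof (cases "q = 1")
      case True
      have "0 < W" using Wq True by simp
      then have "code4 ((R ^^ 0) y) = code4 ((R ^^ 0) y')" using agr by blast
      then have "code4 y = code4 (R y)" using True by (simp add: y'_def)
      then show ?thesis using False Ry by (simp add: code4_def split: if_splits)
    next
      case False
      then show ?thesis unfolding L_def using cnt_pos[of 1 q y] q1 Ry by simp
    qed
  qed
  have per: "\<forall>j<(K - 1) * L. u (c + j + L) = u (c + j)"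
  proof (intro allI impI)
    fix j assume j: "j < (K - 1) * L"
    have "u (c + j + L) = code3 eps l ((T ^^ (j + L)) (Tw y))" using uc[of "j + L"] by (simp add: add.assoc)
    also have "\<dots> = code3 eps l ((T ^^ j) (Tw y'))" by (simp add: B1 funpow_add)
    also have "\<dots> = code3 eps l ((T ^^ j) (Tw y))"
      using lemA[OF y01 y'01 agr] j cW by simp
    finally show "u (c + j + L) = u (c + j)" using uc by simp
  qed
  show ?thesis using word_power[OF L1 _ per] K2 by (simp add: u_def)
qed

end



theorem proposition2:
  fixes eps l x0 :: real
  assumes "0 < eps" "eps < 1" "eps \<notin> \<rat>"
    and "max eps (1 - eps) < l" "l < 1"
    and "0 \<le> x0" "x0 < l"
    and "\<exists>M. \<forall>n. cf_pq eps n \<le> M"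
  shows "(SUP n. ereal (real_of_int (cf_pq eps n div 2))) \<le> seq_ind (iet3_word eps l x0)"
proof (rule SUP_least)
  fix n
  define a where "a = cf_pq eps n"
  show "ereal (real_of_int (cf_pq eps n div 2)) \<le> seq_ind (iet3_word eps l x0)"
  proof (cases "a div 2 \<le> 1")
    case True
    then have "ereal (real_of_int (a div 2)) \<le> 1" by (simp add: one_ereal_def)
    also have "\<dots> \<le> seq_ind (iet3_word eps l x0)" by (rule seq_ind_ge1)
    finally show ?thesis by (simp add: a_def)
  next
    case False
    have "cf_pq eps 0 = 0" using assms(1,2) by (simp add: cf_pq_def floor_eq_iff)
    then have n1: "1 \<le> n" using False a_def by (cases n) auto
    obtain q :: nat and p \<sigma> :: int and \<delta> :: real where qp: "1 \<le> q" "\<sigma> = 1 \<or> \<sigma> = -1" "0 < \<delta>"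
      "real q * eps = p + \<sigma> * \<delta>" "cf_pq eps n * real q * \<delta> < 1"
      using cf_approx[OF assms(1,2,3) n1] by blast
    have qp5: "real_of_int a * real q * \<delta> < 1" using qp(5) by (simp add: a_def)
    define K where "K = nat (a div 2)"
    have K2: "2 \<le> K" using False by (simp add: K_def)
    have Ka: "2 * int K \<le> a" using False unfolding K_def by linarith
    have "int (2 * ((K - 1) * q + 1)) = 2 * (int K - 1) * int q + 2" using K2 by (simp add: of_nat_diff)
    also have "\<dots> \<le> (a - 2) * int q + 2" using Ka qp(1) by (intro add_right_mono mult_right_mono) auto
    also have "\<dots> \<le> a * int q" using qp(1) by (simp add: algebra_simps)
    finally have "real (2 * ((K - 1) * q + 1)) \<le> real_of_int a * real q"
      by (metis of_int_le_iff of_int_of_nat_eq of_int_mult)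
    then have "real (2 * ((K - 1) * q + 1)) * \<delta> \<le> real_of_int a * real q * \<delta>"
      using qp(3) by (intro mult_right_mono) auto
    then have sm: "real (2 * ((K - 1) * q + 1)) * \<delta> < 1" using qp5 by linarith
    have "ereal (real K) \<le> seq_ind (iet3_word eps l x0)"
      by (rule power_exists[OF assms(1,2,3,4,5) qp(1,2,3,4) K2 sm assms(6,7)])
    moreover have "real K = real_of_int (cf_pq eps n div 2)" using False by (simp add: K_def a_def)
    ultimately show ?thesis by simp
  qed
qed

end
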